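(* Consider the Latex Particles Morphology Formation population balance system described in the context, with parameters $a \in \mathbb{R}$, $0<b<1$ and $v_0 = \lambda_{\mathrm{c}} > 0$. If $m(v,t)$, $w(v,t)$ are the solutions of this system, then $m(v,t) = w(v,t) = 0$ for all $v \in [0,v_0)$ and all $t \in \mathbb{R}^+$.
   Context: Fix real constants $a,b$ and positive constants $\lambda_{\mathrm{a}},\lambda_{\mathrm{c}},\lambda_{\mathrm{d}},\lambda_{\mathrm{m}},\lambda_{\mathrm{n}},\lambda_{\mathrm{p}},\lambda_{\mathrm{pol1}}$, $\bar\Psi>0$, $\Psi_r>0$, $\Phi_s\in(0,1)$. Set $v_0:=\lambda_{\mathrm{c}}$ and $\mu:=\lambda_{\mathrm{m}}$. The unknowns are densities $m(v,t), w(v,t)$ ($v,t\ge 0$) and scalar functions $V^{\mathrm{mat}}(t),V^{\mathrm{c_m}}(t),V^{\mathrm{c_w}}(t),\Psi(t),V_{\mathrm{pol2}}(t)$. Define $\alpha(v,u,t):=\tilde\alpha_0(t)[v^a+u^a]$, $\tilde\alpha_0(t):=\lambda_{\mathrm{a}}(\Psi(t)+1)^{14/3}$; $g(v,t):=\tilde\varrho_{\mathrm{d}}(t)v^b+\tilde\varrho_{\mathrm{p}}(t)v$, $\tilde\varrho_{\mathrm{p}}(t):=\lambda_{\mathrm{p}}\Psi(t)/V_p(t)$, $\tilde\varrho_{\mathrm{d}}(t):=\lambda_{\mathrm{d}}\Phi(t)(\Psi(t)+1)^{2/3}$; $n(v,t):=\tilde\eta_0(t)\delta(v-v_0)$ with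 $\tilde\eta_0(t):=\lambda_{\mathrm{n}}\Phi(t)$ and $\delta$ the Dirac delta; $\Phi(t):=\max\{V^{\mathrm{mat}}(t)/[(\Psi(t)+1)(V^{\mathrm{mat}}(t)+\lambda_{\mathrm{pol1}})]-\Phi_s,0\}$; $V_p(t):=(\Psi(t)+1)[V^{\mathrm{mat}}(t)+V^{\mathrm{c_m}}(t)+V^{\mathrm{c_w}}(t)+\lambda_{\mathrm{pol1}}]$; $\Sigma_y(t):=(\Psi(t)+1)^{2/3}\int_0^\infty v^b y(v,t)\,dv$ for $y=m,w$. The system is: for all $v,t>0$, $\partial_t m=-\partial_v(g m)+n-\mu m-m(v,t)\int_0^\infty\alpha(v,u,t)m(u,t)\,du+\tfrac12\int_0^v\alpha(v-u,u,t)m(v-u,t)m(u,t)\,du$, $\partial_t w=-\partial_v(g w)+\mu m-w(v,t)\int_0^\infty\alpha(v,u,t)w(u,t)\,du+\tfrac12\int_0^v\alpha(v-u,u,t)w(v-u,t)w(u,t)\,du$, with $m(v,0)=w(v,0)=0$, $m(0,t)=w(0,t)=0$; coupled to the ODEs $\dot V^{\mathrm{mat}}=\lambda_{\mathrm{p}}\frac{\Psi}{V_p}(V^{\mathrm{mat}}+\lambda_{\mathrm{pol1}})-\Phi[\lambda_{\mathrm{c}}\lambda_{\mathrm{n}}+\lambda_{\mathrm{d}}\Sigma_m+\lambda_{\mathrm{d}}\Sigma_w]$, $\dot V^{\mathrm{c_m}}=\lambda_{\mathrm{p}}\frac{\Psi}{V_p}V^{\mathrm{c_m}}+\Phi[\lambda_{\mathrm{c}}\lambda_{\mathrm{n}}+\lambda_{\mathrm{d}}\Sigma_m]-\lambda_{\mathrm{m}}V^{\mathrm{c_m}}$,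 $\dot V^{\mathrm{c_w}}=\lambda_{\mathrm{p}}\frac{\Psi}{V_p}V^{\mathrm{c_w}}+\lambda_{\mathrm{d}}\Phi\Sigma_w+\lambda_{\mathrm{m}}V^{\mathrm{c_m}}$, $\dot\Psi=-\lambda_{\mathrm{p}}\frac{\Psi}{\Psi+1}\frac{\Psi+\Psi_r}{V_{\mathrm{pol2}}+\lambda_{\mathrm{pol1}}}$, $\dot V_{\mathrm{pol2}}=\lambda_{\mathrm{p}}\frac{\Psi}{\Psi+1}$, with $V^{\mathrm{mat}}(0)=V^{\mathrm{c_m}}(0)=V^{\mathrm{c_w}}(0)=V_{\mathrm{pol2}}(0)=0$, $\Psi(0)=\bar\Psi$. Solutions $m,w$ are understood to be non-negative functions. *)

theory Defs
  imports "HOL-Analysis.Analysis"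
begin

text \<open>Parameters: la = lambda_a, lc = lambda_c (= v0), ld = lambda_d, lm = lambda_m (= mu),
  lnn = lambda_n, lp = lambda_p, lpol1 = lambda_pol1, Psir = Psi_r, Phis = Phi_s.\<close>

definition Phi_of :: "real \<Rightarrow> real \<Rightarrow> real \<Rightarrow> real \<Rightarrow> real" where
  "Phi_of lpol1 Phis Vmat Psi = max (Vmat / ((Psi + 1) * (Vmat + lpol1)) - Phis) 0"

definition Vp_of :: "real \<Rightarrow> real \<Rightarrow> real \<Rightarrow> real \<Rightarrow> real \<Rightarrow> real" where
  "Vp_of lpol1 Vmat Vcm Vcw Psi = (Psi + 1) * (Vmat + Vcm + Vcw + lpol1)"

definition alpha_of :: "real \<Rightarrow> real \<Rightarrow> real \<Rightarrow> real \<Rightarrow> real \<Rightarrow> real" where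
  "alpha_of a la Psi v u = la * (Psi + 1) powr (14/3) * (v powr a + u powr a)"

definition g_of :: "real \<Rightarrow> real \<Rightarrow> real \<Rightarrow> real \<Rightarrow> real \<Rightarrow> real \<Rightarrow> real \<Rightarrow> real \<Rightarrow> real \<Rightarrow> real \<Rightarrow> real" where
  "g_of b ld lp lpol1 Phis Vmat Vcm Vcw Psi v =
     ld * Phi_of lpol1 Phis Vmat Psi * (Psi + 1) powr (2/3) * v powr b
     + lp * Psi / Vp_of lpol1 Vmat Vcm Vcw Psi * v"

definition Sigma_of :: "real \<Rightarrow> real \<Rightarrow> (real \<Rightarrow> real) \<Rightarrow> real" where
  "Sigma_of b Psi y = (Psi + 1) powr (2/3) * (LINT v:{0<..}|lborel. v powr b * y v)"

definition loss_of :: "real \<Rightarrow> real \<Rightarrow> real \<Rightarrow> (real \<Rightarrow> real) \<Rightarrow> real \<Rightarrow> real" where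
  "loss_of a la Psi y v = y v * (LINT u:{0<..}|lborel. alpha_of a la Psi v u * y u)"

definition gain_of :: "real \<Rightarrow> real \<Rightarrow> real \<Rightarrow> (real \<Rightarrow> real) \<Rightarrow> real \<Rightarrow> real" where
  "gain_of a la Psi y v =
     1/2 * (LINT u:{0<..<v}|lborel. alpha_of a la Psi (v - u) u * y (v - u) * y u)"

text \<open>The nucleation term
  n(v,t) = eta0(t) delta(v - v0) vanishes for v \<noteq> v0; the PDEs are required to hold
  pointwise for all v > 0 with v \<noteq> v0 and t > 0 (a jump of m, w across v = v0 is allowed).\<close>
definition is_solution ::
  "real \<Rightarrow> real \<Rightarrow> real \<Rightarrow> real \<Rightarrow> real \<Rightarrow> real \<Rightarrow> real \<Rightarrow> real \<Rightarrow> real \<Rightarrow> real \<Rightarrow> real \<Rightarrow> real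
   \<Rightarrow> (real \<Rightarrow> real \<Rightarrow> real) \<Rightarrow> (real \<Rightarrow> real \<Rightarrow> real)
   \<Rightarrow> (real \<Rightarrow> real) \<Rightarrow> (real \<Rightarrow> real) \<Rightarrow> (real \<Rightarrow> real) \<Rightarrow> (real \<Rightarrow> real) \<Rightarrow> (real \<Rightarrow> real) \<Rightarrow> bool"
where
  "is_solution a b la lc ld lm lnn lp lpol1 Psibar Psir Phis m w Vmat Vcm Vcw Psi Vpol2 \<longleftrightarrow>
   (let v0 = lc; mu = lm;
        Phi = (\<lambda>t. Phi_of lpol1 Phis (Vmat t) (Psi t));
        Vp = (\<lambda>t. Vp_of lpol1 (Vmat t) (Vcm t) (Vcw t) (Psi t));
        g = (\<lambda>v t. g_of b ld lp lpol1 Phis (Vmat t) (Vcm t) (Vcw t) (Psi t) v);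
        Sm = (\<lambda>t. Sigma_of b (Psi t) (\<lambda>v. m v t));
        Sw = (\<lambda>t. Sigma_of b (Psi t) (\<lambda>v. w v t))
    in
     \<comment> \<open>non-negativity\<close>
     (\<forall>v t. 0 \<le> m v t \<and> 0 \<le> w v t) \<and>
     \<comment> \<open>initial and boundary conditions\<close>
     (\<forall>v\<ge>0. m v 0 = 0 \<and> w v 0 = 0) \<and>
     (\<forall>t\<ge>0. m 0 t = 0 \<and> w 0 t = 0) \<and>
     \<comment> \<open>continuity of the densities away from the nucleation size\<close>
     continuous_on {(v, t). 0 \<le> v \<and> v \<noteq> v0 \<and> 0 \<le> t} (\<lambda>(v, t). m v t) \<and>
     continuous_on {(v, t). 0 \<le> v \<and> v \<noteq> v0 \<and> 0 \<le> t} (\<lambda>(v, t). w v t) \<and>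
     \<comment> \<open>existence of the integrals\<close>
     (\<forall>t>0. set_integrable lborel {0<..} (\<lambda>v. v powr b * m v t) \<and>
             set_integrable lborel {0<..} (\<lambda>v. v powr b * w v t)) \<and>
     (\<forall>v>0. \<forall>t>0.
        set_integrable lborel {0<..} (\<lambda>u. alpha_of a la (Psi t) v u * m u t) \<and>
        set_integrable lborel {0<..} (\<lambda>u. alpha_of a la (Psi t) v u * w u t) \<and>
        set_integrable lborel {0<..<v} (\<lambda>u. alpha_of a la (Psi t) (v - u) u * m (v - u) t * m u t) \<and>
        set_integrable lborel {0<..<v} (\<lambda>u. alpha_of a la (Psi t) (v - u) u * w (v - u) t * w u t)) \<and>
     \<comment> \<open>population balance equations (n = 0 for v \<noteq> v0)\<close>
     (\<forall>v t. 0 < v \<and> v \<noteq> v0 \<and> 0 < t \<longrightarrow>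
        (\<exists>Dt Dv. ((\<lambda>s. m v s) has_real_derivative Dt) (at t) \<and>
                 ((\<lambda>x. g x t * m x t) has_real_derivative Dv) (at v) \<and>
                 Dt = - Dv - mu * m v t - loss_of a la (Psi t) (\<lambda>u. m u t) v
                      + gain_of a la (Psi t) (\<lambda>u. m u t) v)) \<and>
     (\<forall>v t. 0 < v \<and> v \<noteq> v0 \<and> 0 < t \<longrightarrow>
        (\<exists>Dt Dv. ((\<lambda>s. w v s) has_real_derivative Dt) (at t) \<and>
                 ((\<lambda>x. g x t * w x t) has_real_derivative Dv) (at v) \<and>
                 Dt = - Dv + mu * m v t - loss_of a la (Psi t) (\<lambda>u. w u t) v
                      + gain_of a la (Psi t) (\<lambda>u. w u t) v)) \<and>
     \<comment> \<open>ODEs\<close>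
     continuous_on {0..} Vmat \<and> continuous_on {0..} Vcm \<and> continuous_on {0..} Vcw \<and>
     continuous_on {0..} Psi \<and> continuous_on {0..} Vpol2 \<and>
     Vmat 0 = 0 \<and> Vcm 0 = 0 \<and> Vcw 0 = 0 \<and> Vpol2 0 = 0 \<and> Psi 0 = Psibar \<and>
     (\<forall>t>0.
        (Vmat has_real_derivative
           (lp * Psi t / Vp t * (Vmat t + lpol1) - Phi t * (lc * lnn + ld * Sm t + ld * Sw t))) (at t) \<and>
        (Vcm has_real_derivative
           (lp * Psi t / Vp t * Vcm t + Phi t * (lc * lnn + ld * Sm t) - lm * Vcm t)) (at t) \<and>
        (Vcw has_real_derivative
           (lp * Psi t / Vp t * Vcw t + ld * Phi t * Sw t + lm * Vcm t)) (at t) \<and>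
        (Psi has_real_derivative
           (- lp * (Psi t / (Psi t + 1)) * ((Psi t + Psir) / (Vpol2 t + lpol1)))) (at t) \<and>
        (Vpol2 has_real_derivative (lp * (Psi t / (Psi t + 1)))) (at t)))"

end

theory Submission
  imports Defs
begin


lemma maxprin:
  fixes y g :: "real \<Rightarrow> real \<Rightarrow> real" and V T :: real
  assumes VT: "0 \<le> V" "0 \<le> T"
    and cont: "continuous_on ({0..V} \<times> {0..T}) (\<lambda>(v, t). y v t)"
    and nonneg: "\<And>v t. 0 \<le> y v t"
    and bd0: "\<And>t. 0 \<le> t \<Longrightarrow> y 0 t = 0"
    and init: "\<And>v. 0 \<le> v \<Longrightarrow> y v 0 = 0"
    and gmono: "\<And>t x v. 0 < t \<Longrightarrow> 0 \<le> x \<Longrightarrow> x \<le> v \<Longrightarrow> 0 \<le> g x t \<and> g x t \<le> g v t"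
    and pde: "\<And>v t. 0 < v \<Longrightarrow> v \<le> V \<Longrightarrow> 0 < t \<Longrightarrow> t \<le> T \<Longrightarrow> 0 < y v t \<Longrightarrow>
       (\<And>u. 0 < u \<Longrightarrow> u < v \<Longrightarrow> y u t \<le> y v t) \<Longrightarrow>
       \<exists>Dt Dv. ((\<lambda>s. y v s) has_real_derivative Dt) (at t) \<and>
               ((\<lambda>x. g x t * y x t) has_real_derivative Dv) (at v) \<and> Dt \<le> - Dv"
  shows "y V T = 0"
proof (rule ccontr)
  assume ne: "y V T \<noteq> 0"
  let ?K = "{0..V} \<times> {0..T}"
  let ?phi = "\<lambda>p. exp (- snd p) * y (fst p) (snd p)"
  have cphi: "continuous_on ?K ?phi"
  proof -
    have "continuous_on ?K (\<lambda>p. exp (- snd p))"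
      by (intro continuous_intros)
    moreover have "continuous_on ?K (\<lambda>p. y (fst p) (snd p))"
      using cont by (simp add: case_prod_beta')
    ultimately show ?thesis by (intro continuous_intros)
  qed
  have "compact ?K" by (intro compact_Times compact_Icc)
  moreover have "?K \<noteq> {}" using VT by auto
  ultimately obtain p where pK: "p \<in> ?K" and pmax: "\<And>q. q \<in> ?K \<Longrightarrow> ?phi q \<le> ?phi p"
    using continuous_attains_sup[OF _ _ cphi] by blast
  obtain vs ts where p: "p = (vs, ts)" by (cases p)
  have vsr: "0 \<le> vs" "vs \<le> V" and tsr: "0 \<le> ts" "ts \<le> T" using pK p by auto
  have yVT: "0 < y V T" using ne nonneg[of V T] by simp
  have "?phi (V, T) \<le> ?phi p" using pmax VT by auto
  moreover have "0 < exp (- T) * y V T" using yVT by simp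
  ultimately have "0 < exp (- ts) * y vs ts" using p by simp
  hence ypos: "0 < y vs ts" by (simp add: zero_less_mult_iff)
  have vspos: "0 < vs" using ypos bd0[OF tsr(1)] vsr by (cases "vs = 0") auto
  have tspos: "0 < ts" using ypos init[OF vsr(1)] tsr by (cases "ts = 0") auto
  have ymaxv: "y u ts \<le> y vs ts" if "0 < u" "u < vs" for u
  proof -
    have "?phi (u, ts) \<le> ?phi p" using pmax that vsr tsr by auto
    thus ?thesis using p by simp
  qed
  obtain Dt Dv where dt: "((\<lambda>s. y vs s) has_real_derivative Dt) (at ts)"
    and dv: "((\<lambda>x. g x ts * y x ts) has_real_derivative Dv) (at vs)" and eq: "Dt \<le> - Dv"
    using pde[OF vspos vsr(2) tspos tsr(2) ypos ymaxv] by blast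
  have Dv: "0 \<le> Dv"
  proof (rule ccontr)
    assume "\<not> 0 \<le> Dv"
    then obtain d where d: "d > 0" and dd: "\<And>h. h > 0 \<Longrightarrow> h < d \<Longrightarrow>
        g vs ts * y vs ts < g (vs - h) ts * y (vs - h) ts"
      using DERIV_neg_dec_left[OF dv] by force
    define h where "h = min (d/2) (vs/2)"
    have h: "h > 0" "h < d" "h < vs" using d vspos by (auto simp: h_def)
    have "g (vs - h) ts * y (vs - h) ts \<le> g vs ts * y vs ts"
      using gmono[OF tspos, of "vs - h" vs] ymaxv[of "vs - h"] h nonneg
      by (intro mult_mono) auto
    thus False using dd[OF h(1,2)] by simp
  qed
  have dphi: "((\<lambda>s. exp (- s) * y vs s) has_real_derivative
      (exp (- ts) * Dt + (- exp (- ts)) * y vs ts)) (at ts)"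
    by (rule derivative_eq_intros refl dt | simp)+
  have "0 \<le> exp (- ts) * Dt + (- exp (- ts)) * y vs ts"
  proof (rule ccontr)
    assume "\<not> ?thesis"
    then obtain d where d: "d > 0" and dd: "\<And>h. h > 0 \<Longrightarrow> h < d \<Longrightarrow>
        exp (- ts) * y vs ts < exp (- (ts - h)) * y vs (ts - h)"
      using DERIV_neg_dec_left[OF dphi] by force
    define h where "h = min (d/2) (ts/2)"
    have h: "h > 0" "h < d" "h < ts" using d tspos by (auto simp: h_def)
    have "?phi (vs, ts - h) \<le> ?phi p" using h vsr tsr by (intro pmax) auto
    thus False using dd[OF h(1,2)] p by simp
  qed
  hence "y vs ts \<le> Dt" by (simp add: algebra_simps)
  thus False using Dv eq ypos by linarith
qed



lemma gain_le_loss: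
  fixes y :: "real \<Rightarrow> real" and a la P v :: real
  assumes la: "0 < la" and v: "0 < v"
    and ynn: "\<And>u. 0 \<le> y u"
    and ymax: "\<And>u. 0 < u \<Longrightarrow> u < v \<Longrightarrow> y u \<le> y v"
    and i1: "set_integrable lborel {0<..} (\<lambda>u. alpha_of a la P v u * y u)"
    and i2: "set_integrable lborel {0<..<v} (\<lambda>u. alpha_of a la P (v - u) u * y (v - u) * y u)"
  shows "gain_of a la P y v \<le> loss_of a la P y v"
proof -
  define c where "c = la * (P + 1) powr (14/3)"
  have c0: "0 \<le> c" unfolding c_def using la by simp
  have alpha: "alpha_of a la P x u = c * (x powr a + u powr a)" for x u
    unfolding alpha_of_def c_def by simp
  define A1 where "A1 u = indicator {0<..} u * (alpha_of a la P v u * y u)" for u :: real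
  define Hi where "Hi u = indicator {0<..} u * (c * u powr a * y u)" for u :: real
  define Hv where "Hv u = indicator {0<..<v} u * (c * u powr a * y u)" for u :: real
  define Fi where "Fi u = indicator {0<..<v} u * (alpha_of a la P (v - u) u * y (v - u) * y u)" for u :: real
  have intA1: "integrable lborel A1" using i1 unfolding A1_def set_integrable_def by simp
  have intFi: "integrable lborel Fi" using i2 unfolding Fi_def set_integrable_def by simp
  have HiA: "Hi u = A1 u * (u powr a / (v powr a + u powr a))" for u
  proof (cases "0 < u")
    case True
    have "0 < v powr a + u powr a" using True v by (simp add: add_pos_pos)
    then show ?thesis unfolding Hi_def A1_def alpha using True by (simp add: field_simps)
  qed (simp add: Hi_def A1_def)
  have mHi: "Hi \<in> borel_measurable lborel"
    unfolding HiA[abs_def] using borel_measurable_integrable[OF intA1] by measurable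
  have Hi_le: "0 \<le> Hi u \<and> Hi u \<le> A1 u" for u
    using ynn[of u] c0 unfolding Hi_def A1_def alpha
    by (auto simp: indicator_def algebra_simps)
  have intHi: "integrable lborel Hi"
    proof (rule Bochner_Integration.integrable_bound[OF intA1 mHi], rule AE_I2)
    fix x show "norm (Hi x) \<le> norm (A1 x)" using Hi_le[of x] by simp
  qed
  have HvHi: "Hv u = indicator {0<..<v} u * Hi u" for u
    unfolding Hv_def Hi_def by (auto simp: indicator_def)
  have intHv: "integrable lborel Hv"
    unfolding HvHi[abs_def] using integrable_mult_indicator[OF _ intHi, of "{0<..<v}"] by simp
  have intHr: "integrable lborel (\<lambda>u. Hv (v + (-1) * u))"
    using lborel_integrable_real_affine[OF intHv, of "-1" v] by simp
  have refl: "integral\<^sup>L lborel Hv = integral\<^sup>L lborel (\<lambda>u. Hv (v + (-1) * u))"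
    using lborel_integral_real_affine[of "-1" Hv v] by simp
  have FiH: "Fi u \<le> y v * (Hv (v + (-1) * u) + Hv u)" for u
  proof (cases "0 < u \<and> u < v")
    case True
    have y1: "y (v - u) \<le> y v" using ymax True by simp
    have y2: "y u \<le> y v" using ymax True by simp
    have p1: "0 \<le> c * (v - u) powr a * y (v - u)" using c0 ynn by simp
    have p2: "0 \<le> c * u powr a * y u" using c0 ynn by simp
    have "Fi u = c * (v - u) powr a * y (v - u) * y u + c * u powr a * y u * y (v - u)"
      using True unfolding Fi_def alpha by (simp add: algebra_simps)
    also have "\<dots> \<le> c * (v - u) powr a * y (v - u) * y v + c * u powr a * y u * y v"
      by (intro add_mono mult_left_mono y1 y2 p1 p2)
    also have "\<dots> = y v * (Hv (v + (-1) * u) + Hv u)"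
      using True unfolding Hv_def by (simp add: algebra_simps)
    finally show ?thesis .
  next
    case False
    then have "Fi u = 0" "Hv u = 0" "Hv (v + (-1) * u) = 0" unfolding Fi_def Hv_def by (auto simp: indicator_def)
    then show ?thesis by simp
  qed
  have "integral\<^sup>L lborel Fi \<le> integral\<^sup>L lborel (\<lambda>u. y v * (Hv (v + (-1) * u) + Hv u))"
    by (rule integral_mono[OF intFi _ FiH]) (intro integrable_mult_right Bochner_Integration.integrable_add intHr intHv)
  also have "\<dots> = y v * (2 * integral\<^sup>L lborel Hv)"
    using refl intHr intHv by simp
  finally have F1: "integral\<^sup>L lborel Fi \<le> y v * (2 * integral\<^sup>L lborel Hv)" .
  have "integral\<^sup>L lborel Hv \<le> integral\<^sup>L lborel A1"
    by (rule integral_mono[OF intHv intA1]) (use Hi_le in \<open>fastforce simp: HvHi indicator_def\<close>)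
  hence "y v * (2 * integral\<^sup>L lborel Hv) \<le> y v * (2 * integral\<^sup>L lborel A1)"
    using ynn[of v] by (intro mult_left_mono) auto
  with F1 have "integral\<^sup>L lborel Fi / 2 \<le> y v * integral\<^sup>L lborel A1" by simp
  moreover have "gain_of a la P y v = integral\<^sup>L lborel Fi / 2"
    unfolding gain_of_def Fi_def set_lebesgue_integral_def by simp
  moreover have "loss_of a la P y v = y v * integral\<^sup>L lborel A1"
    unfolding loss_of_def A1_def set_lebesgue_integral_def by simp
  ultimately show ?thesis by simp
qed



lemma Psi_pos:
  fixes Psi Vpol2 :: "real \<Rightarrow> real" and lp lpol1 Psir T :: real
  assumes lp: "0 < lp" and lpol1: "0 < lpol1" and Psir: "0 < Psir" and P0: "0 < Psi 0"
    and V0: "Vpol2 0 = 0" and cP: "continuous_on {0..} Psi" and cV: "continuous_on {0..} Vpol2"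
    and dP: "\<forall>t>0. (Psi has_real_derivative
           (- lp * (Psi t / (Psi t + 1)) * ((Psi t + Psir) / (Vpol2 t + lpol1)))) (at t)"
    and dV: "\<forall>t>0. (Vpol2 has_real_derivative (lp * (Psi t / (Psi t + 1)))) (at t)"
    and T: "0 \<le> T"
  shows "0 < Psi T"
proof (rule ccontr)
  assume "\<not> 0 < Psi T"
  define S where "S = {0..T} \<inter> Psi -` {..0}"
  have cPT: "continuous_on {0..T} Psi" using cP by (rule continuous_on_subset) auto
  have "closed S" unfolding S_def by (rule continuous_closed_preimage[OF cPT]) auto
  moreover have "S \<noteq> {}" using \<open>\<not> 0 < Psi T\<close> T unfolding S_def by auto
  moreover have bS: "bdd_below S" unfolding S_def by (rule bdd_belowI[of _ 0]) auto
  ultimately have t1S: "Inf S \<in> S" by (rule closed_contains_Inf[rotated -1])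
  define t1 where "t1 = Inf S"
  have t1: "0 \<le> t1" "t1 \<le> T" "Psi t1 \<le> 0" using t1S unfolding t1_def S_def by auto
  have before: "0 < Psi t" if "0 \<le> t" "t < t1" for t
  proof (rule ccontr)
    assume "\<not> 0 < Psi t"
    hence "t \<in> S" using that t1 unfolding S_def by auto
    hence "t1 \<le> t" unfolding t1_def by (rule cInf_lower[OF _ bS])
    thus False using that by simp
  qed
  have Vnn: "0 \<le> Vpol2 s" if "0 \<le> s" "s \<le> t1" for s
  proof -
    have "Vpol2 0 \<le> Vpol2 s"
    proof (rule DERIV_nonneg_imp_increasing_open[OF that(1)])
      fix x assume "0 < x" "x < s"
      hence "0 < Psi x" using before that by simp
      thus "\<exists>y. (Vpol2 has_real_derivative y) (at x) \<and> 0 \<le> y"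
        using dV \<open>0 < x\<close> lp by (intro exI[of _ "lp * (Psi x / (Psi x + 1))"]) simp
    next
      show "continuous_on {0..s} Vpol2" using cV by (rule continuous_on_subset) auto
    qed
    thus ?thesis using V0 by simp
  qed
  have Ple: "Psi s \<le> Psi 0" if "0 \<le> s" "s \<le> t1" for s
  proof -
    have "(\<lambda>x. - Psi x) 0 \<le> (\<lambda>x. - Psi x) s"
    proof (rule DERIV_nonneg_imp_increasing_open[OF that(1)])
      fix x assume x: "0 < x" "x < s"
      hence px: "0 < Psi x" using before that by simp
      have vx: "0 \<le> Vpol2 x" using Vnn x that by simp
      have "0 \<le> lp * (Psi x / (Psi x + 1)) * ((Psi x + Psir) / (Vpol2 x + lpol1))"
        using px vx lp lpol1 Psir by simp
      thus "\<exists>y. ((\<lambda>x. - Psi x) has_real_derivative y) (at x) \<and> 0 \<le> y"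
        using dP x by (intro exI[of _ "lp * (Psi x / (Psi x + 1)) * ((Psi x + Psir) / (Vpol2 x + lpol1))"])
          (auto intro!: derivative_eq_intros)
    next
      show "continuous_on {0..s} (\<lambda>x. - Psi x)" using cP
        by (intro continuous_intros) (rule continuous_on_subset, auto)
    qed
    thus ?thesis by simp
  qed
  define K where "K = lp * (Psi 0 + Psir) / lpol1"
  have "(\<lambda>x. exp (K * x) * Psi x) 0 \<le> (\<lambda>x. exp (K * x) * Psi x) t1"
  proof (rule DERIV_nonneg_imp_increasing_open[OF t1(1)])
    fix x assume x: "0 < x" "x < t1"
    hence px: "0 < Psi x" using before by simp
    have vx: "0 \<le> Vpol2 x" using Vnn x by simp
    have plx: "Psi x \<le> Psi 0" using Ple x by simp
    have e1: "Psi x / (Psi x + 1) \<le> Psi x" using px by (simp add: field_simps)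
    have e2: "(Psi x + Psir) / (Vpol2 x + lpol1) \<le> (Psi 0 + Psir) / lpol1"
      using vx lpol1 plx px Psir by (intro frac_le) auto
    have "lp * (Psi x / (Psi x + 1)) * ((Psi x + Psir) / (Vpol2 x + lpol1))
          \<le> lp * Psi x * ((Psi 0 + Psir) / lpol1)"
      using e1 e2 lp px vx lpol1 Psir
      by (intro mult_mono mult_left_mono) auto
    also have "\<dots> = K * Psi x" unfolding K_def by simp
    finally have key: "0 \<le> K * Psi x + (- lp * (Psi x / (Psi x + 1)) * ((Psi x + Psir) / (Vpol2 x + lpol1)))"
      by simp
    have "((\<lambda>x. exp (K * x) * Psi x) has_real_derivative
        exp (K * x) * (K * Psi x + (- lp * (Psi x / (Psi x + 1)) * ((Psi x + Psir) / (Vpol2 x + lpol1))))) (at x)"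
      using dP x by (auto intro!: derivative_eq_intros simp: algebra_simps)
    moreover have "0 \<le> exp (K * x) * (K * Psi x + (- lp * (Psi x / (Psi x + 1)) * ((Psi x + Psir) / (Vpol2 x + lpol1))))"
      using key by simp
    ultimately show "\<exists>y. ((\<lambda>x. exp (K * x) * Psi x) has_real_derivative y) (at x) \<and> 0 \<le> y" by blast
  next
    show "continuous_on {0..t1} (\<lambda>x. exp (K * x) * Psi x)" using cP
      by (intro continuous_intros) (rule continuous_on_subset, auto)
  qed
  hence "0 < exp (K * t1) * Psi t1" using P0 by simp
  hence "0 < Psi t1" by (simp add: zero_less_mult_iff)
  thus False using t1 by simp
qed

lemma S_nonneg:
  fixes S Psi :: "real \<Rightarrow> real" and lp lpol1 T :: real
  assumes lp: "0 < lp" and S0: "S 0 = 0" and cS: "continuous_on {0..} S"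
    and Ppos: "\<And>t. 0 < t \<Longrightarrow> 0 < Psi t"
    and dS: "\<And>t. 0 < t \<Longrightarrow> (S has_real_derivative
        (lp * Psi t / ((Psi t + 1) * (S t + lpol1)) * (S t + lpol1))) (at t)"
    and T: "0 \<le> T"
  shows "0 \<le> S T"
proof -
  have "S 0 \<le> S T"
  proof (rule DERIV_nonneg_imp_increasing_open[OF T])
    fix x assume x: "0 < x" "x < T"
    have "0 \<le> lp * Psi x / ((Psi x + 1) * (S x + lpol1)) * (S x + lpol1)"
    proof (cases "S x + lpol1 = 0")
      case False
      have "Psi x + 1 \<noteq> 0" using Ppos[OF x(1)] by simp
      with False have "lp * Psi x / ((Psi x + 1) * (S x + lpol1)) * (S x + lpol1) = lp * Psi x / (Psi x + 1)"
        by (metis (no_types) mult.commute nonzero_mult_divide_mult_cancel_left times_divide_eq_left)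
      thus ?thesis using Ppos[OF x(1)] lp by simp
    qed simp
    thus "\<exists>y. (S has_real_derivative y) (at x) \<and> 0 \<le> y" using dS[OF x(1)] by blast
  next
    show "continuous_on {0..T} S" using cS by (rule continuous_on_subset) auto
  qed
  thus ?thesis using S0 by simp
qed

lemma g_mono:
  fixes b ld lp lpol1 Phis Vmat Vcm Vcw Psi x v :: real
  assumes "0 < b" "0 < ld" "0 < lp" "0 < Psi" "0 < Vp_of lpol1 Vmat Vcm Vcw Psi"
    and "0 \<le> x" "x \<le> v"
  shows "0 \<le> g_of b ld lp lpol1 Phis Vmat Vcm Vcw Psi x \<and>
         g_of b ld lp lpol1 Phis Vmat Vcm Vcw Psi x \<le> g_of b ld lp lpol1 Phis Vmat Vcm Vcw Psi v"
proof -
  define A where "A = ld * Phi_of lpol1 Phis Vmat Psi * (Psi + 1) powr (2/3)"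
  define B where "B = lp * Psi / Vp_of lpol1 Vmat Vcm Vcw Psi"
  have A: "0 \<le> A" unfolding A_def Phi_of_def using assms by simp
  have B: "0 \<le> B" unfolding B_def using assms by simp
  have g: "g_of b ld lp lpol1 Phis Vmat Vcm Vcw Psi u = A * u powr b + B * u" for u
    unfolding g_of_def A_def B_def by simp
  have "x powr b \<le> v powr b" using assms by (intro powr_mono2) auto
  hence "A * x powr b \<le> A * v powr b" using A by (rule mult_left_mono)
  moreover have "B * x \<le> B * v" using B assms by (intro mult_left_mono) auto
  ultimately show ?thesis unfolding g using A B assms by simp
qed



theorem propositionB1:
  fixes a b la lc ld lm lnn lp lpol1 Psibar Psir Phis :: real
    and m w :: "real \<Rightarrow> real \<Rightarrow> real"
    and Vmat Vcm Vcw Psi Vpol2 :: "real \<Rightarrow> real"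
  assumes "0 < b" and "b < 1"
    and "0 < la" and "0 < lc" and "0 < ld" and "0 < lm" and "0 < lnn" and "0 < lp"
    and "0 < lpol1" and "0 < Psibar" and "0 < Psir" and "0 < Phis" and "Phis < 1"
    and "is_solution a b la lc ld lm lnn lp lpol1 Psibar Psir Phis m w Vmat Vcm Vcw Psi Vpol2"
  shows "\<forall>v t. 0 \<le> v \<and> v < lc \<and> 0 \<le> t \<longrightarrow> m v t = 0 \<and> w v t = 0"
proof -
  note sol = assms(14)[unfolded is_solution_def Let_def]
  have nn: "\<forall>v t. 0 \<le> m v t \<and> 0 \<le> w v t" using sol by blast
  have init: "\<forall>v\<ge>0. m v 0 = 0 \<and> w v 0 = 0" using sol by blast
  have bd: "\<forall>t\<ge>0. m 0 t = 0 \<and> w 0 t = 0" using sol by blast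
  have cm: "continuous_on {(v, t). 0 \<le> v \<and> v \<noteq> lc \<and> 0 \<le> t} (\<lambda>(v, t). m v t)" using sol by blast
  have cw: "continuous_on {(v, t). 0 \<le> v \<and> v \<noteq> lc \<and> 0 \<le> t} (\<lambda>(v, t). w v t)" using sol by blast
  have ints: "\<forall>v>0. \<forall>t>0.
        set_integrable lborel {0<..} (\<lambda>u. alpha_of a la (Psi t) v u * m u t) \<and>
        set_integrable lborel {0<..} (\<lambda>u. alpha_of a la (Psi t) v u * w u t) \<and>
        set_integrable lborel {0<..<v} (\<lambda>u. alpha_of a la (Psi t) (v - u) u * m (v - u) t * m u t) \<and>
        set_integrable lborel {0<..<v} (\<lambda>u. alpha_of a la (Psi t) (v - u) u * w (v - u) t * w u t)"
    using sol by blast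
  let ?g = "\<lambda>v t. g_of b ld lp lpol1 Phis (Vmat t) (Vcm t) (Vcw t) (Psi t) v"
  have pdem: "\<forall>v t. 0 < v \<and> v \<noteq> lc \<and> 0 < t \<longrightarrow>
        (\<exists>Dt Dv. ((\<lambda>s. m v s) has_real_derivative Dt) (at t) \<and>
                 ((\<lambda>x. ?g x t * m x t) has_real_derivative Dv) (at v) \<and>
                 Dt = - Dv - lm * m v t - loss_of a la (Psi t) (\<lambda>u. m u t) v
                      + gain_of a la (Psi t) (\<lambda>u. m u t) v)" using sol by blast
  have pdew: "\<forall>v t. 0 < v \<and> v \<noteq> lc \<and> 0 < t \<longrightarrow>
        (\<exists>Dt Dv. ((\<lambda>s. w v s) has_real_derivative Dt) (at t) \<and>
                 ((\<lambda>x. ?g x t * w x t) has_real_derivative Dv) (at v) \<and>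
                 Dt = - Dv + lm * m v t - loss_of a la (Psi t) (\<lambda>u. w u t) v
                      + gain_of a la (Psi t) (\<lambda>u. w u t) v)" using sol by blast
  have cont5: "continuous_on {0..} Vmat" "continuous_on {0..} Vcm" "continuous_on {0..} Vcw"
     "continuous_on {0..} Psi" "continuous_on {0..} Vpol2" using sol by blast+
  have init5: "Vmat 0 = 0" "Vcm 0 = 0" "Vcw 0 = 0" "Vpol2 0 = 0" "Psi 0 = Psibar" using sol by blast+
  let ?Vp = "\<lambda>t. Vp_of lpol1 (Vmat t) (Vcm t) (Vcw t) (Psi t)"
  let ?Phi = "\<lambda>t. Phi_of lpol1 Phis (Vmat t) (Psi t)"
  let ?Sm = "\<lambda>t. Sigma_of b (Psi t) (\<lambda>v. m v t)"
  let ?Sw = "\<lambda>t. Sigma_of b (Psi t) (\<lambda>v. w v t)"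
  have odes: "\<forall>t>0.
        (Vmat has_real_derivative
           (lp * Psi t / ?Vp t * (Vmat t + lpol1) - ?Phi t * (lc * lnn + ld * ?Sm t + ld * ?Sw t))) (at t) \<and>
        (Vcm has_real_derivative
           (lp * Psi t / ?Vp t * Vcm t + ?Phi t * (lc * lnn + ld * ?Sm t) - lm * Vcm t)) (at t) \<and>
        (Vcw has_real_derivative
           (lp * Psi t / ?Vp t * Vcw t + ld * ?Phi t * ?Sw t + lm * Vcm t)) (at t) \<and>
        (Psi has_real_derivative
           (- lp * (Psi t / (Psi t + 1)) * ((Psi t + Psir) / (Vpol2 t + lpol1)))) (at t) \<and>
        (Vpol2 has_real_derivative (lp * (Psi t / (Psi t + 1)))) (at t)"
    using sol by blast
  have Ppos: "0 < Psi t" if "0 \<le> t" for t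
    by (rule Psi_pos[of lp lpol1 Psir Psi Vpol2 t])
       (use assms odes cont5 init5 that in auto)
  have dS: "((\<lambda>s. Vmat s + Vcm s + Vcw s) has_real_derivative
        (lp * Psi t / ((Psi t + 1) * ((Vmat t + Vcm t + Vcw t) + lpol1)) * ((Vmat t + Vcm t + Vcw t) + lpol1))) (at t)"
    if t: "0 < t" for t
  proof -
    from odes t have d1: "(Vmat has_real_derivative
           (lp * Psi t / ?Vp t * (Vmat t + lpol1) - ?Phi t * (lc * lnn + ld * ?Sm t + ld * ?Sw t))) (at t)"
      and d2: "(Vcm has_real_derivative
           (lp * Psi t / ?Vp t * Vcm t + ?Phi t * (lc * lnn + ld * ?Sm t) - lm * Vcm t)) (at t)"
      and d3: "(Vcw has_real_derivative
           (lp * Psi t / ?Vp t * Vcw t + ld * ?Phi t * ?Sw t + lm * Vcm t)) (at t)" by blast+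
    have alg: "\<And>q X Y Z P A B C l.
        (q * (X + l) - P * (A + B + ld * C)) + (q * Y + P * (A + B) - lm * Y) + (q * Z + ld * P * C + lm * Y)
        = q * ((X + Y + Z) + l)" by (simp add: algebra_simps)
    have "((\<lambda>s. Vmat s + Vcm s + Vcw s) has_real_derivative
        (lp * Psi t / ?Vp t * ((Vmat t + Vcm t + Vcw t) + lpol1))) (at t)"
      by (rule DERIV_cong[OF DERIV_add[OF DERIV_add[OF d1 d2] d3]])
         (rule alg)
    then show ?thesis by (simp only: Vp_of_def add.assoc)
  qed
  have Snn: "0 \<le> Vmat t + Vcm t + Vcw t" if "0 \<le> t" for t
  proof (rule S_nonneg[of lp "\<lambda>s. Vmat s + Vcm s + Vcw s" Psi lpol1 t])
    show "continuous_on {0..} (\<lambda>s. Vmat s + Vcm s + Vcw s)"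
      using cont5 by (intro continuous_intros)
  qed (use assms init5 Ppos dS that in auto)
  have Vppos: "0 < ?Vp t" if "0 \<le> t" for t
    using Snn[OF that] Ppos[OF that] assms by (simp add: Vp_of_def)
  have gm: "0 \<le> ?g x t \<and> ?g x t \<le> ?g v t" if "0 < t" "0 \<le> x" "x \<le> v" for t x v
    using that Ppos Vppos assms by (intro g_mono) auto
  have nn': "\<And>v t. 0 \<le> m v t" "\<And>v t. 0 \<le> w v t" using nn by auto
  have bd': "\<And>t. 0 \<le> t \<Longrightarrow> m 0 t = 0" "\<And>t. 0 \<le> t \<Longrightarrow> w 0 t = 0" using bd by auto
  have init': "\<And>v. 0 \<le> v \<Longrightarrow> m v 0 = 0" "\<And>v. 0 \<le> v \<Longrightarrow> w v 0 = 0" using init by auto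
  have gm': "\<And>t x v. 0 < t \<Longrightarrow> 0 \<le> x \<Longrightarrow> x \<le> v \<Longrightarrow> 0 \<le> ?g x t \<and> ?g x t \<le> ?g v t"
    using gm by blast
  have mz: "m v t = 0" if v: "0 \<le> v" "v < lc" and t: "0 \<le> t" for v t
  proof -
    have c: "continuous_on ({0..v} \<times> {0..t}) (\<lambda>(v, t). m v t)"
      by (rule continuous_on_subset[OF cm]) (use v in auto)
    have p: "\<exists>Dt Dv. ((\<lambda>s. m v' s) has_real_derivative Dt) (at t') \<and>
               ((\<lambda>x. ?g x t' * m x t') has_real_derivative Dv) (at v') \<and> Dt \<le> - Dv"
      if v': "0 < v'" "v' \<le> v" and t': "0 < t'" "t' \<le> t" and yp: "0 < m v' t'"
      and ymax: "\<And>u. 0 < u \<Longrightarrow> u < v' \<Longrightarrow> m u t' \<le> m v' t'" for v' t'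
    proof -
      have ne: "v' \<noteq> lc" using v' v by simp
      obtain Dt Dv where d: "((\<lambda>s. m v' s) has_real_derivative Dt) (at t')"
        "((\<lambda>x. ?g x t' * m x t') has_real_derivative Dv) (at v')"
        and eq: "Dt = - Dv - lm * m v' t' - loss_of a la (Psi t') (\<lambda>u. m u t') v'
                        + gain_of a la (Psi t') (\<lambda>u. m u t') v'"
        using pdem v'(1) t'(1) ne by blast
      have i1: "set_integrable lborel {0<..} (\<lambda>u. alpha_of a la (Psi t') v' u * m u t')"
        and i2: "set_integrable lborel {0<..<v'} (\<lambda>u. alpha_of a la (Psi t') (v' - u) u * m (v' - u) t' * m u t')"
        using ints v'(1) t'(1) by blast+
      have "gain_of a la (Psi t') (\<lambda>u. m u t') v' \<le> loss_of a la (Psi t') (\<lambda>u. m u t') v'"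
        by (rule gain_le_loss[OF assms(3) v'(1) nn'(1) ymax i1 i2])
      moreover have "0 \<le> lm * m v' t'" using assms(6) nn'(1) by simp
      ultimately have "Dt \<le> - Dv" using eq by linarith
      thus ?thesis using d by blast
    qed
    show ?thesis by (rule maxprin[OF v(1) t c nn'(1) bd'(1) init'(1) gm' p])
  qed
  have wz: "w v t = 0" if v: "0 \<le> v" "v < lc" and t: "0 \<le> t" for v t
  proof -
    have c: "continuous_on ({0..v} \<times> {0..t}) (\<lambda>(v, t). w v t)"
      by (rule continuous_on_subset[OF cw]) (use v in auto)
    have p: "\<exists>Dt Dv. ((\<lambda>s. w v' s) has_real_derivative Dt) (at t') \<and>
               ((\<lambda>x. ?g x t' * w x t') has_real_derivative Dv) (at v') \<and> Dt \<le> - Dv"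
      if v': "0 < v'" "v' \<le> v" and t': "0 < t'" "t' \<le> t" and yp: "0 < w v' t'"
      and ymax: "\<And>u. 0 < u \<Longrightarrow> u < v' \<Longrightarrow> w u t' \<le> w v' t'" for v' t'
    proof -
      have ne: "v' \<noteq> lc" using v' v by simp
      obtain Dt Dv where d: "((\<lambda>s. w v' s) has_real_derivative Dt) (at t')"
        "((\<lambda>x. ?g x t' * w x t') has_real_derivative Dv) (at v')"
        and eq: "Dt = - Dv + lm * m v' t' - loss_of a la (Psi t') (\<lambda>u. w u t') v'
                        + gain_of a la (Psi t') (\<lambda>u. w u t') v'"
        using pdew v'(1) t'(1) ne by blast
      have i1: "set_integrable lborel {0<..} (\<lambda>u. alpha_of a la (Psi t') v' u * w u t')"
        and i2: "set_integrable lborel {0<..<v'} (\<lambda>u. alpha_of a la (Psi t') (v' - u) u * w (v' - u) t' * w u t')"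
        using ints v'(1) t'(1) by blast+
      have "gain_of a la (Psi t') (\<lambda>u. w u t') v' \<le> loss_of a la (Psi t') (\<lambda>u. w u t') v'"
        by (rule gain_le_loss[OF assms(3) v'(1) nn'(2) ymax i1 i2])
      moreover have "m v' t' = 0" using mz v' t' v by simp
      ultimately have "Dt \<le> - Dv" using eq by simp
      thus ?thesis using d by blast
    qed
    show ?thesis by (rule maxprin[OF v(1) t c nn'(2) bd'(2) init'(2) gm' p])
  qed
  show ?thesis using mz wz by blast
qed

end
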